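(* For every integer $n\geqslant 1$ there exist a family $\mathscr B$ of boxes in $\mathbb R^2$ and two lines $l_1,l_2$ parallel to the $x$-axis such that every box of $\mathscr B$ intersects at least one of $l_1,l_2$, $\nu(\mathscr B)=n$, and $\tau(\mathscr B)=\left[\frac{3n}{2}\right]$.
   Context: A box in $\mathbb R^2$ is a set $[a_1,b_1]\times[a_2,b_2]$ with sides parallel to the coordinate axes. For a family $\mathscr B$ of boxes, $\nu(\mathscr B)$ is the maximal number of pairwise disjoint members of $\mathscr B$, and $\tau(\mathscr B)$ is the minimal number of points in a set meeting every member of $\mathscr B$. $[x]$ denotes the integer part of $x$. *)

theory Defs
  imports Complex_Main
begin

definition is_box :: "(real \<times> real) set \<Rightarrow> bool" where
  "is_box S \<longleftrightarrow> (\<exists>a1 b1 a2 b2. a1 \<le> b1 \<and> a2 \<le> b2 \<and> S = {a1..b1} \<times> {a2..b2})"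

definition pairwise_disjoint_fam :: "(real \<times> real) set set \<Rightarrow> bool" where
  "pairwise_disjoint_fam F \<longleftrightarrow> (\<forall>S\<in>F. \<forall>T\<in>F. S \<noteq> T \<longrightarrow> S \<inter> T = {})"

definition nu :: "(real \<times> real) set set \<Rightarrow> nat" where
  "nu B = (GREATEST k. \<exists>F. F \<subseteq> B \<and> finite F \<and> card F = k \<and> pairwise_disjoint_fam F)"

definition tau :: "(real \<times> real) set set \<Rightarrow> nat" where
  "tau B = (LEAST k. \<exists>P. finite P \<and> card P = k \<and> (\<forall>S\<in>B. S \<inter> P \<noteq> {}))"

definition hline :: "real \<Rightarrow> (real \<times> real) set" where
  "hline c = {p. snd p = c}"

end

theory Submission
  imports Defs
begin

definition off :: "nat \<Rightarrow> real" where "off k = 40 * real k"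

definition B1 :: "nat \<Rightarrow> (real \<times> real) set" where "B1 k = {off k + 5 .. off k + 25} \<times> {0..7}"
definition B2 :: "nat \<Rightarrow> (real \<times> real) set" where "B2 k = {off k .. off k + 5} \<times> {0..10}"
definition B3 :: "nat \<Rightarrow> (real \<times> real) set" where "B3 k = {off k .. off k + 10} \<times> {10..10}"
definition B4 :: "nat \<Rightarrow> (real \<times> real) set" where "B4 k = {off k + 10 .. off k + 20} \<times> {10..10}"
definition B5 :: "nat \<Rightarrow> (real \<times> real) set" where "B5 k = {off k + 20 .. off k + 30} \<times> {5..10}"

definition gad :: "nat \<Rightarrow> (real \<times> real) set set" where
  "gad k = {B1 k, B2 k, B3 k, B4 k, B5 k}"

definition fam :: "nat \<Rightarrow> (real \<times> real) set set" where
  "fam m = (\<Union>k<m. gad k)"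

definition Sb :: "nat \<Rightarrow> (real \<times> real) set" where "Sb m = {off m .. off m} \<times> {0..0}"

lemmas bdefs = B1_def B2_def B3_def B4_def B5_def

lemma fam_Suc: "fam (Suc m) = fam m \<union> gad m"
  unfolding fam_def by (auto simp: lessThan_Suc)

lemma finite_fam: "finite (fam m)"
  unfolding fam_def gad_def by auto

lemma is_box_I: "a1 \<le> b1 \<Longrightarrow> a2 \<le> b2 \<Longrightarrow> is_box ({a1..b1} \<times> {a2..b2})"
  unfolding is_box_def by (intro exI[of _ a1] exI[of _ b1] exI[of _ a2] exI[of _ b2]) simp

lemma gad_box: "S \<in> gad k \<Longrightarrow> is_box S"
proof -
  have "is_box (B1 k)" unfolding B1_def by (rule is_box_I) auto
  moreover have "is_box (B2 k)" unfolding B2_def by (rule is_box_I) auto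
  moreover have "is_box (B3 k)" unfolding B3_def by (rule is_box_I) auto
  moreover have "is_box (B4 k)" unfolding B4_def by (rule is_box_I) auto
  moreover have "is_box (B5 k)" unfolding B5_def by (rule is_box_I) auto
  ultimately show "S \<in> gad k \<Longrightarrow> is_box S" unfolding gad_def by blast
qed

lemma fam_box: "S \<in> fam m \<Longrightarrow> is_box S"
  unfolding fam_def using gad_box by auto

lemma Sb_box: "is_box (Sb m)"
  unfolding Sb_def by (rule is_box_I) auto

lemma gad_line: "S \<in> gad k \<Longrightarrow> S \<inter> hline 0 \<noteq> {} \<or> S \<inter> hline 10 \<noteq> {}"
proof -
  assume "S \<in> gad k"
  moreover have "(off k + 5, 0) \<in> B1 k \<inter> hline 0" by (simp add: B1_def hline_def)
  moreover have "(off k + 5, 0) \<in> B2 k \<inter> hline 0" by (simp add: B2_def hline_def)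
  moreover have "(off k + 10, 10) \<in> B3 k \<inter> hline 10" by (simp add: B3_def hline_def)
  moreover have "(off k + 10, 10) \<in> B4 k \<inter> hline 10" by (simp add: B4_def hline_def)
  moreover have "(off k + 20, 10) \<in> B5 k \<inter> hline 10" by (simp add: B5_def hline_def)
  ultimately show ?thesis unfolding gad_def by blast
qed

lemma fam_line: "S \<in> fam m \<Longrightarrow> S \<inter> hline 0 \<noteq> {} \<or> S \<inter> hline 10 \<noteq> {}"
  unfolding fam_def using gad_line by auto

lemma Sb_line: "Sb m \<inter> hline 0 \<noteq> {}"
proof -
  have "(off m, 0) \<in> Sb m \<inter> hline 0" by (simp add: Sb_def hline_def)
  then show ?thesis by blast
qed

lemma disj13: "B1 k \<inter> B3 k = {}" unfolding bdefs by auto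
lemma disj14: "B1 k \<inter> B4 k = {}" unfolding bdefs by auto
lemma disj24: "B2 k \<inter> B4 k = {}" unfolding bdefs by auto
lemma disj25: "B2 k \<inter> B5 k = {}" unfolding bdefs by auto
lemma disj35: "B3 k \<inter> B5 k = {}" unfolding bdefs by auto

lemma gad_strip: "S \<in> gad k \<Longrightarrow> p \<in> S \<Longrightarrow> off k \<le> fst p \<and> fst p < off k + 40"
proof -
  assume S: "S \<in> gad k" and p: "p \<in> S"
  obtain x y where xy: "p = (x, y)" by (cases p)
  have "S = B1 k \<or> S = B2 k \<or> S = B3 k \<or> S = B4 k \<or> S = B5 k" using S by (simp add: gad_def)
  then show ?thesis using p unfolding xy
    by (elim disjE) (simp_all add: bdefs)
qed

lemma fam_strip: "S \<in> fam m \<Longrightarrow> p \<in> S \<Longrightarrow> fst p < off m"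
proof -
  assume "S \<in> fam m" "p \<in> S"
  then obtain k where k: "k < m" "S \<in> gad k" unfolding fam_def by auto
  then have "fst p < off k + 40" using gad_strip \<open>p \<in> S\<close> by blast
  moreover have "off k + 40 \<le> off m" using k(1) unfolding off_def
    by (simp add: Suc_le_eq[symmetric] of_nat_le_iff[symmetric] del: of_nat_le_iff)
  ultimately show ?thesis by simp
qed

lemma gad_tau:
  assumes fin: "finite P" and hit: "\<forall>S\<in>gad k. S \<inter> P \<noteq> {}"
  shows "3 \<le> card {p\<in>P. off k \<le> fst p \<and> fst p < off k + 40}"
proof -
  let ?R = "{p\<in>P. off k \<le> fst p \<and> fst p < off k + 40}"
  have fR: "finite ?R" using fin by simp
  have ex: "\<And>S. S \<in> gad k \<Longrightarrow> \<exists>p. p \<in> S \<and> p \<in> ?R"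
  proof -
    fix S assume S: "S \<in> gad k"
    then obtain p where "p \<in> S" "p \<in> P" using hit by blast
    then show "\<exists>p. p \<in> S \<and> p \<in> ?R" using gad_strip[OF S] by blast
  qed
  obtain f1 where f1: "f1 \<in> B1 k" "f1 \<in> ?R" using ex[of "B1 k"] by (auto simp: gad_def)
  obtain f2 where f2: "f2 \<in> B2 k" "f2 \<in> ?R" using ex[of "B2 k"] by (auto simp: gad_def)
  obtain f3 where f3: "f3 \<in> B3 k" "f3 \<in> ?R" using ex[of "B3 k"] by (auto simp: gad_def)
  obtain f4 where f4: "f4 \<in> B4 k" "f4 \<in> ?R" using ex[of "B4 k"] by (auto simp: gad_def)
  obtain f5 where f5: "f5 \<in> B5 k" "f5 \<in> ?R" using ex[of "B5 k"] by (auto simp: gad_def)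
  have three: "\<And>a b c. a \<in> ?R \<Longrightarrow> b \<in> ?R \<Longrightarrow> c \<in> ?R \<Longrightarrow> a \<noteq> b \<Longrightarrow> a \<noteq> c \<Longrightarrow> b \<noteq> c \<Longrightarrow> 3 \<le> card ?R"
  proof -
    fix a b c assume abc: "a \<in> ?R" "b \<in> ?R" "c \<in> ?R" and ne: "a \<noteq> b" "a \<noteq> c" "b \<noteq> c"
    have sub: "{a,b,c} \<subseteq> ?R" by (simp only: insert_subset empty_subsetI abc simp_thms)
    have c3: "card {a,b,c} = 3" using ne by simp
    show "3 \<le> card ?R" using card_mono[OF fR sub] c3 by simp
  qed
  have d13: "f1 \<noteq> f3" using disj13[of k] f1 f3 by blast
  have d53: "f5 \<noteq> f3" using disj35[of k] f5 f3 by blast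
  have d41: "f4 \<noteq> f1" using disj14[of k] f1 f4 by blast
  have d24: "f2 \<noteq> f4" using disj24[of k] f2 f4 by blast
  have d25: "f2 \<noteq> f5" using disj25[of k] f2 f5 by blast
  show ?thesis
  proof (cases "f5 = f1")
    case False
    then show ?thesis using three[OF f1(2) f3(2) f5(2)] d13 d53 by auto
  next
    case True
    show ?thesis
    proof (cases "f4 = f3")
      case False
      then show ?thesis using three[OF f1(2) f3(2) f4(2)] d13 d41 by auto
    next
      case True2: True
      show ?thesis using three[OF f1(2) f2(2) f3(2)] d13 d24 d25 True True2 by auto
    qed
  qed
qed

lemma fam_tau:
  assumes fin: "finite P" and hit: "\<forall>S\<in>fam m. S \<inter> P \<noteq> {}"
  shows "3 * m \<le> card {p\<in>P. fst p < off m}"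
  using hit
proof (induction m)
  case 0
  then show ?case by simp
next
  case (Suc m)
  have h1: "\<forall>S\<in>fam m. S \<inter> P \<noteq> {}" using Suc.prems by (simp add: fam_Suc)
  have h2: "\<forall>S\<in>gad m. S \<inter> P \<noteq> {}" using Suc.prems by (simp add: fam_Suc)
  have eq: "{p\<in>P. fst p < off (Suc m)} = {p\<in>P. fst p < off m} \<union> {p\<in>P. off m \<le> fst p \<and> fst p < off m + 40}"
    by (auto simp: off_def)
  have "card ({p\<in>P. fst p < off m} \<union> {p\<in>P. off m \<le> fst p \<and> fst p < off m + 40})
     = card {p\<in>P. fst p < off m} + card {p\<in>P. off m \<le> fst p \<and> fst p < off m + 40}"
    by (rule card_Un_disjoint) (use fin in auto)
  then show ?case using Suc.IH[OF h1] gad_tau[OF fin h2] eq by simp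
qed

definition H :: "nat \<Rightarrow> (real \<times> real) set" where
  "H m = (\<Union>k<m. {(off k + 5, 0), (off k + 10, 10), (off k + 20, 5)})"

lemma H_props: "finite (H m) \<and> card (H m) = 3 * m \<and> (\<forall>p\<in>H m. fst p < off m) \<and> (\<forall>S\<in>fam m. S \<inter> H m \<noteq> {})"
proof (induction m)
  case 0
  then show ?case by (simp add: H_def fam_def)
next
  case (Suc m)
  let ?T = "{(off m + 5, 0), (off m + 10, 10), (off m + 20, 5)} :: (real \<times> real) set"
  have HS: "H (Suc m) = H m \<union> ?T" unfolding H_def by (auto simp: lessThan_Suc)
  have fin: "finite (H m)" and cm: "card (H m) = 3 * m" and stm: "\<forall>p\<in>H m. fst p < off m"
    and hitold: "\<forall>S\<in>fam m. S \<inter> H m \<noteq> {}" using Suc.IH by blast+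
  have Tge: "\<forall>p\<in>?T. off m \<le> fst p \<and> fst p < off m + 40" by simp
  have disj: "H m \<inter> ?T = {}"
  proof (rule equals0I)
    fix p assume "p \<in> H m \<inter> ?T"
    then have "fst p < off m" "off m \<le> fst p" using stm Tge by blast+
    then show False by simp
  qed
  have cT: "card ?T = 3" by simp
  have c: "card (H (Suc m)) = 3 * Suc m" 
    unfolding HS using card_Un_disjoint[OF fin _ disj] cm cT by simp
  have offS: "off (Suc m) = off m + 40" by (simp add: off_def algebra_simps)
  have st: "\<forall>p\<in>H (Suc m). fst p < off (Suc m)"
  proof
    fix p assume "p \<in> H (Suc m)"
    then have "p \<in> H m \<or> p \<in> ?T" unfolding HS by blast
    then show "fst p < off (Suc m)" unfolding offS
    proof
      assume "p \<in> H m" then have "fst p < off m" using stm by blast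
      then show "fst p < off m + 40" by simp
    next
      assume "p \<in> ?T" then show "fst p < off m + 40" using Tge by blast
    qed
  qed
  have e1: "(off m + 5, 0) \<in> ?T" "(off m + 10, 10) \<in> ?T" "(off m + 20, 5) \<in> ?T" by simp_all
  have h1: "B1 m \<inter> ?T \<noteq> {}" using e1(1) by (auto simp: B1_def)
  have h2: "B2 m \<inter> ?T \<noteq> {}" using e1(1) by (auto simp: B2_def)
  have h3: "B3 m \<inter> ?T \<noteq> {}" using e1(2) by (auto simp: B3_def)
  have h4: "B4 m \<inter> ?T \<noteq> {}" using e1(2) by (auto simp: B4_def)
  have h5: "B5 m \<inter> ?T \<noteq> {}" using e1(3) by (auto simp: B5_def)
  have hitT: "\<forall>S\<in>gad m. S \<inter> ?T \<noteq> {}"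
    unfolding gad_def using h1 h2 h3 h4 h5 by simp
  have "\<forall>S\<in>fam (Suc m). S \<inter> H (Suc m) \<noteq> {}"
  proof
    fix S assume "S \<in> fam (Suc m)"
    then have "S \<in> fam m \<or> S \<in> gad m" by (simp add: fam_Suc)
    then show "S \<inter> H (Suc m) \<noteq> {}"
    proof
      assume "S \<in> fam m" then have "S \<inter> H m \<noteq> {}" using hitold by blast
      then show ?thesis unfolding HS by blast
    next
      assume "S \<in> gad m" then have "S \<inter> ?T \<noteq> {}" using hitT by blast
      then show ?thesis unfolding HS by blast
    qed
  qed
  moreover have "finite (H (Suc m))" unfolding HS using fin by simp
  ultimately show ?case using c st by blast
qed

lemma ne12: "B1 k \<noteq> B2 k"
proof -
  have "(off k + 25, 0) \<in> B1 k" "(off k + 25, 0) \<notin> B2 k" by (simp_all add: bdefs)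
  then show ?thesis by blast
qed
lemma ne23: "B2 k \<noteq> B3 k"
proof -
  have "(off k, 0) \<in> B2 k" "(off k, 0) \<notin> B3 k" by (simp_all add: bdefs)
  then show ?thesis by blast
qed
lemma ne34: "B3 k \<noteq> B4 k"
proof -
  have "(off k, 10) \<in> B3 k" "(off k, 10) \<notin> B4 k" by (simp_all add: bdefs)
  then show ?thesis by blast
qed
lemma ne45: "B4 k \<noteq> B5 k"
proof -
  have "(off k + 10, 10) \<in> B4 k" "(off k + 10, 10) \<notin> B5 k" by (simp_all add: bdefs)
  then show ?thesis by blast
qed
lemma ne51: "B5 k \<noteq> B1 k"
proof -
  have "(off k + 30, 10) \<in> B5 k" "(off k + 30, 10) \<notin> B1 k" by (simp_all add: bdefs)
  then show ?thesis by blast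
qed

lemma int12: "B1 k \<inter> B2 k \<noteq> {}"
proof - have "(off k + 5, 0) \<in> B1 k \<inter> B2 k" by (simp add: bdefs) then show ?thesis by blast qed
lemma int23: "B2 k \<inter> B3 k \<noteq> {}"
proof - have "(off k, 10) \<in> B2 k \<inter> B3 k" by (simp add: bdefs) then show ?thesis by blast qed
lemma int34: "B3 k \<inter> B4 k \<noteq> {}"
proof - have "(off k + 10, 10) \<in> B3 k \<inter> B4 k" by (simp add: bdefs) then show ?thesis by blast qed
lemma int45: "B4 k \<inter> B5 k \<noteq> {}"
proof - have "(off k + 20, 10) \<in> B4 k \<inter> B5 k" by (simp add: bdefs) then show ?thesis by blast qed
lemma int51: "B5 k \<inter> B1 k \<noteq> {}"
proof - have "(off k + 20, 5) \<in> B5 k \<inter> B1 k" by (simp add: bdefs) then show ?thesis by blast qed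

lemma card2: "card {a, b} \<le> 2" by (simp add: card_insert_if)

lemma gad_nu:
  assumes pd: "pairwise_disjoint_fam F"
  shows "card (F \<inter> gad k) \<le> 2"
proof -
  have no: "\<And>S T. S \<in> F \<Longrightarrow> T \<in> F \<Longrightarrow> S \<noteq> T \<Longrightarrow> S \<inter> T = {}"
    using pd unfolding pairwise_disjoint_fam_def by blast
  have n12: "\<not> (B1 k \<in> F \<and> B2 k \<in> F)" using no[of "B1 k" "B2 k"] ne12[of k] int12[of k] by blast
  have n23: "\<not> (B2 k \<in> F \<and> B3 k \<in> F)" using no[of "B2 k" "B3 k"] ne23[of k] int23[of k] by blast
  have n34: "\<not> (B3 k \<in> F \<and> B4 k \<in> F)" using no[of "B3 k" "B4 k"] ne34[of k] int34[of k] by blast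
  have n45: "\<not> (B4 k \<in> F \<and> B5 k \<in> F)" using no[of "B4 k" "B5 k"] ne45[of k] int45[of k] by blast
  have n51: "\<not> (B5 k \<in> F \<and> B1 k \<in> F)" using no[of "B5 k" "B1 k"] ne51[of k] int51[of k] by blast
  have sub2: "F \<inter> gad k \<subseteq> {a, b}" if "B1 k \<notin> F \<or> B1 k \<in> {a,b}" "B2 k \<notin> F \<or> B2 k \<in> {a,b}"
     "B3 k \<notin> F \<or> B3 k \<in> {a,b}" "B4 k \<notin> F \<or> B4 k \<in> {a,b}" "B5 k \<notin> F \<or> B5 k \<in> {a,b}" for a b
  proof
    fix X assume "X \<in> F \<inter> gad k"
    then have "X \<in> F" "X = B1 k \<or> X = B2 k \<or> X = B3 k \<or> X = B4 k \<or> X = B5 k" by (auto simp: gad_def)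
    then show "X \<in> {a, b}" using that by (elim disjE) simp_all
  qed
  have "\<exists>a b. F \<inter> gad k \<subseteq> {a, b}"
  proof (cases "B1 k \<in> F")
    case True
    then have "B2 k \<notin> F" "B5 k \<notin> F" using n12 n51 by auto
    show ?thesis
    proof (cases "B3 k \<in> F")
      case True3: True
      then have "B4 k \<notin> F" using n34 by auto
      then show ?thesis using True True3 \<open>B2 k \<notin> F\<close> \<open>B5 k \<notin> F\<close>
        by (intro exI[of _ "B1 k"] exI[of _ "B3 k"] sub2) simp_all
    next
      case False3: False
      then show ?thesis using True \<open>B2 k \<notin> F\<close> \<open>B5 k \<notin> F\<close>
        by (intro exI[of _ "B1 k"] exI[of _ "B4 k"] sub2) simp_all
    qed
  next
    case False
    show ?thesis
    proof (cases "B2 k \<in> F")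
      case True
      then have "B3 k \<notin> F" using n23 by auto
      show ?thesis
      proof (cases "B4 k \<in> F")
        case True4: True
        then have "B5 k \<notin> F" using n45 by auto
        then show ?thesis using \<open>B3 k \<notin> F\<close> False True True4
          by (intro exI[of _ "B2 k"] exI[of _ "B4 k"] sub2) simp_all
      next
        case False4: False
        then show ?thesis using \<open>B3 k \<notin> F\<close> False True
          by (intro exI[of _ "B2 k"] exI[of _ "B5 k"] sub2) simp_all
      qed
    next
      case False2: False
      show ?thesis
      proof (cases "B4 k \<in> F")
        case True4: True
        then have "B5 k \<notin> F" "B3 k \<notin> F" using n45 n34 by auto
        then show ?thesis using False False2 True4
          by (intro exI[of _ "B4 k"] exI[of _ "B4 k"] sub2) simp_all
      next
        case False4: False
        then show ?thesis using False False2
          by (intro exI[of _ "B3 k"] exI[of _ "B5 k"] sub2) simp_all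
      qed
    qed
  qed
  then obtain a b where "F \<inter> gad k \<subseteq> {a, b}" by blast
  then have "card (F \<inter> gad k) \<le> card {a, b}" by (intro card_mono) simp_all
  then show ?thesis using card2[of a b] by linarith
qed

lemma fam_nu:
  assumes pd: "pairwise_disjoint_fam F"
  shows "card (F \<inter> fam m) \<le> 2 * m"
proof (induction m)
  case 0
  then show ?case by (simp add: fam_def)
next
  case (Suc m)
  have "F \<inter> fam (Suc m) = (F \<inter> fam m) \<union> (F \<inter> gad m)" by (auto simp: fam_Suc)
  then have "card (F \<inter> fam (Suc m)) \<le> card (F \<inter> fam m) + card (F \<inter> gad m)"
    by (simp add: card_Un_le)
  then show ?case using Suc.IH gad_nu[OF pd, of m] by simp
qed

definition D :: "nat \<Rightarrow> (real \<times> real) set set" where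
  "D m = (\<Union>k<m. {B1 k, B3 k})"

lemma D_props: "D m \<subseteq> fam m \<and> finite (D m) \<and> card (D m) = 2 * m \<and> pairwise_disjoint_fam (D m)"
proof (induction m)
  case 0
  then show ?case by (simp add: D_def fam_def pairwise_disjoint_fam_def)
next
  case (Suc m)
  let ?T = "{B1 m, B3 m}"
  have DS: "D (Suc m) = D m \<union> ?T" unfolding D_def by (auto simp: lessThan_Suc)
  have sub: "D m \<subseteq> fam m" using Suc.IH by simp
  have p1: "(off m + 5, 0) \<in> B1 m" "(off m, 10) \<in> B3 m" by (simp_all add: bdefs)
  have disj: "D m \<inter> ?T = {}"
  proof (rule ccontr)
    assume "D m \<inter> ?T \<noteq> {}"
    then obtain S where S: "S \<in> fam m" "S \<in> ?T" using sub by blast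
    then obtain p where "p \<in> S" "off m \<le> fst p" using p1 by auto
    then show False using fam_strip[OF S(1)] by fastforce
  qed
  have ne: "B1 m \<noteq> B3 m" using disj13[of m] p1 by blast
  have cT: "card ?T = 2" using ne by simp
  have c: "card (D (Suc m)) = 2 * Suc m" using DS card_Un_disjoint[OF _ _ disj] Suc.IH cT by simp
  have sub2: "D (Suc m) \<subseteq> fam (Suc m)" using DS sub fam_Suc gad_def by auto
  have pdm: "pairwise_disjoint_fam (D m)" using Suc.IH by blast
  have cross: "S \<inter> T = {}" if "S \<in> D m" "T \<in> ?T" for S T
  proof (rule equals0I)
    fix p assume p: "p \<in> S \<inter> T"
    have "T \<in> gad m" using that(2) by (auto simp: gad_def)
    then have "off m \<le> fst p" using gad_strip[of T m p] p by blast
    moreover have "S \<in> fam m" using sub that(1) by blast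
    then have "fst p < off m" using fam_strip[of S m p] p by blast
    ultimately show False by simp
  qed
  have pd: "pairwise_disjoint_fam (D (Suc m))"
    unfolding pairwise_disjoint_fam_def
  proof (intro ballI impI)
    fix S T assume S: "S \<in> D (Suc m)" and T: "T \<in> D (Suc m)" and st: "S \<noteq> T"
    have S': "S \<in> D m \<or> S \<in> ?T" using S DS by blast
    have T': "T \<in> D m \<or> T \<in> ?T" using T DS by blast
    have d31: "B3 m \<inter> B1 m = {}" using disj13[of m] by blast
    have cross': "S \<inter> T = {}" if "S \<in> ?T" "T \<in> D m" for S T
      using cross[OF that(2) that(1)] by blast
    show "S \<inter> T = {}"
      using S' T'
    proof (elim disjE)
      assume "S \<in> D m" "T \<in> D m"
      then show ?thesis using pdm st unfolding pairwise_disjoint_fam_def by blast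
    next
      assume "S \<in> D m" "T \<in> ?T" then show ?thesis by (rule cross)
    next
      assume "S \<in> ?T" "T \<in> D m" then show ?thesis by (rule cross')
    next
      assume "S \<in> ?T" "T \<in> ?T"
      then show ?thesis using st disj13[of m] d31 by auto
    qed
  qed
  show ?case using c sub2 pd DS Suc.IH by simp
qed

lemma tau_eq:
  assumes "\<exists>P. finite P \<and> card P = t \<and> (\<forall>S\<in>B. S \<inter> P \<noteq> {})"
    and "\<And>P. finite P \<Longrightarrow> (\<forall>S\<in>B. S \<inter> P \<noteq> {}) \<Longrightarrow> t \<le> card P"
  shows "tau B = t"
  unfolding tau_def
  by (rule Least_equality) (use assms in auto)

lemma nu_eq:
  assumes "\<exists>F. F \<subseteq> B \<and> finite F \<and> card F = t \<and> pairwise_disjoint_fam F"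
    and "\<And>F. F \<subseteq> B \<Longrightarrow> finite F \<Longrightarrow> pairwise_disjoint_fam F \<Longrightarrow> card F \<le> t"
  shows "nu B = t"
  unfolding nu_def
  by (rule Greatest_equality) (use assms in auto)

lemma even_case:
  "finite (fam m) \<and> (\<forall>S\<in>fam m. is_box S) \<and> (\<forall>S\<in>fam m. S \<inter> hline 0 \<noteq> {} \<or> S \<inter> hline 10 \<noteq> {})
   \<and> nu (fam m) = 2 * m \<and> tau (fam m) = 3 * m"
proof -
  have nu: "nu (fam m) = 2 * m"
  proof (rule nu_eq)
    show "\<exists>F. F \<subseteq> fam m \<and> finite F \<and> card F = 2 * m \<and> pairwise_disjoint_fam F"
      using D_props[of m] by blast
  next
    fix F assume "F \<subseteq> fam m" "finite F" "pairwise_disjoint_fam F"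
    then show "card F \<le> 2 * m" using fam_nu[of F m] by (simp add: Int_absorb2)
  qed
  have tau: "tau (fam m) = 3 * m"
  proof (rule tau_eq)
    show "\<exists>P. finite P \<and> card P = 3 * m \<and> (\<forall>S\<in>fam m. S \<inter> P \<noteq> {})"
      using H_props[of m] by blast
  next
    fix P assume P: "finite P" "\<forall>S\<in>fam m. S \<inter> P \<noteq> {}"
    have "card {p\<in>P. fst p < off m} \<le> card P" using P(1) by (intro card_mono) auto
    then show "3 * m \<le> card P" using fam_tau[OF P] by simp
  qed
  show ?thesis using nu tau finite_fam fam_box fam_line by (intro conjI) blast+
qed

lemma odd_case:
  "finite (insert (Sb m) (fam m)) \<and> (\<forall>S\<in>insert (Sb m) (fam m). is_box S)
   \<and> (\<forall>S\<in>insert (Sb m) (fam m). S \<inter> hline 0 \<noteq> {} \<or> S \<inter> hline 10 \<noteq> {})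
   \<and> nu (insert (Sb m) (fam m)) = 2 * m + 1 \<and> tau (insert (Sb m) (fam m)) = 3 * m + 1"
proof -
  let ?B = "insert (Sb m) (fam m)"
  have Sbnot: "Sb m \<notin> fam m"
  proof
    assume "Sb m \<in> fam m"
    moreover have "(off m, 0) \<in> Sb m" by (simp add: Sb_def)
    ultimately show False using fam_strip by fastforce
  qed
  have nu: "nu ?B = 2 * m + 1"
  proof (rule nu_eq)
    obtain F where F: "F \<subseteq> fam m" "finite F" "card F = 2 * m" "pairwise_disjoint_fam F"
      using D_props[of m] by blast
    have nf: "Sb m \<notin> F" using Sbnot F(1) by blast
    have "pairwise_disjoint_fam (insert (Sb m) F)"
      unfolding pairwise_disjoint_fam_def
    proof (intro ballI impI)
      fix S T assume S: "S \<in> insert (Sb m) F" and T: "T \<in> insert (Sb m) F" and st: "S \<noteq> T"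
      have cross: "X \<inter> Sb m = {}" if "X \<in> F" for X
        using fam_strip[of X m] F(1) that by (fastforce simp: Sb_def)
      show "S \<inter> T = {}"
        using S T st cross F(4) unfolding pairwise_disjoint_fam_def by blast
    qed
    then show "\<exists>F. F \<subseteq> ?B \<and> finite F \<and> card F = 2 * m + 1 \<and> pairwise_disjoint_fam F"
      using F nf by (intro exI[of _ "insert (Sb m) F"]) auto
  next
    fix F assume F: "F \<subseteq> ?B" "finite F" "pairwise_disjoint_fam F"
    have "F \<subseteq> insert (Sb m) (F \<inter> fam m)" using F(1) by blast
    then have "card F \<le> card (insert (Sb m) (F \<inter> fam m))"
      by (intro card_mono) (use F(2) in auto)
    also have "\<dots> \<le> card (F \<inter> fam m) + 1" by (simp add: card_insert_le_m1 card_insert_if)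
    finally show "card F \<le> 2 * m + 1" using fam_nu[OF F(3), of m] by simp
  qed
  have tau: "tau ?B = 3 * m + 1"
  proof (rule tau_eq)
    obtain P where P: "finite P" "card P = 3 * m" "\<forall>p\<in>P. fst p < off m" "\<forall>S\<in>fam m. S \<inter> P \<noteq> {}"
      using H_props[of m] by blast
    have np: "(off m, 0) \<notin> P" using P(3) by fastforce
    have "(off m, 0) \<in> Sb m" by (simp add: Sb_def)
    then have "\<forall>S\<in>?B. S \<inter> insert (off m, 0) P \<noteq> {}" using P(4) by blast
    then show "\<exists>P. finite P \<and> card P = 3 * m + 1 \<and> (\<forall>S\<in>?B. S \<inter> P \<noteq> {})"
      using P np by (intro exI[of _ "insert (off m, 0) P"]) auto
  next
    fix P assume P: "finite P" "\<forall>S\<in>?B. S \<inter> P \<noteq> {}"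
    then obtain q where q: "q \<in> Sb m" "q \<in> P" by blast
    have fq: "fst q = off m" using q(1) by (auto simp: Sb_def)
    have P2: "\<forall>S\<in>fam m. S \<inter> P \<noteq> {}" using P(2) by blast
    have "insert q {p\<in>P. fst p < off m} \<subseteq> P" using q by auto
    then have "card (insert q {p\<in>P. fst p < off m}) \<le> card P" using P(1) by (intro card_mono) auto
    moreover have "card (insert q {p\<in>P. fst p < off m}) = card {p\<in>P. fst p < off m} + 1"
      using fq P(1) by simp
    ultimately show "3 * m + 1 \<le> card P" using fam_tau[OF P(1) P2] by simp
  qed
  have a1: "finite ?B" using finite_fam by simp
  have a2: "\<forall>S\<in>?B. is_box S" using fam_box Sb_box by blast
  have a3: "\<forall>S\<in>?B. S \<inter> hline 0 \<noteq> {} \<or> S \<inter> hline 10 \<noteq> {}"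
  proof
    fix S assume "S \<in> ?B"
    then show "S \<inter> hline 0 \<noteq> {} \<or> S \<inter> hline 10 \<noteq> {}"
    proof
      assume "S = Sb m" then show ?thesis using Sb_line by simp
    next
      assume "S \<in> fam m" then show ?thesis by (rule fam_line)
    qed
  qed
  show ?thesis using nu tau a1 a2 a3 by (intro conjI)
qed

theorem mainTheorem3:
  fixes n :: nat
  assumes "n \<ge> 1"
  shows "\<exists>B c1 c2. finite B \<and> (\<forall>S\<in>B. is_box S) \<and> c1 \<noteq> c2 \<and>
           (\<forall>S\<in>B. S \<inter> hline c1 \<noteq> {} \<or> S \<inter> hline c2 \<noteq> {}) \<and>
           nu B = n \<and> tau B = nat \<lfloor>3 * real n / 2\<rfloor>"
proof (cases "even n")
  case True
  then obtain m where m: "n = 2 * m" by blast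
  have "3 * real n / 2 = real (3 * m)" using m by simp
  then have fl: "nat \<lfloor>3 * real n / 2\<rfloor> = 3 * m" by (simp only: floor_of_nat nat_int)
  show ?thesis using even_case[of m] m fl
    by (intro exI[of _ "fam m"] exI[of _ "0::real"] exI[of _ "10::real"]) simp
next
  case False
  then obtain m where m: "n = 2 * m + 1" using oddE by blast
  have "3 * real n / 2 = real (3 * m + 1) + 1 / 2" using m by simp
  then have "\<lfloor>3 * real n / 2\<rfloor> = int (3 * m + 1)" by (simp add: floor_eq_iff)
  then have fl: "nat \<lfloor>3 * real n / 2\<rfloor> = 3 * m + 1" by simp
  show ?thesis using odd_case[of m] m fl
    by (intro exI[of _ "insert (Sb m) (fam m)"] exI[of _ "0::real"] exI[of _ "10::real"]) simp
qed

end
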